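(* Under the setting described in the context (conditions (V), (S), (C), compactly supported initial measure $\mu_0$, lattice approximate solution $\mu^N_t$), there is a compact set $K_V\subseteq\mathbb{R}^d\times\mathbb{R}^d$, independent of $l$ and $N$, such that $\operatorname{supp}V[\mu^N_{t_l}]\subseteq K_V$ for all $l$ and all (sufficiently large) $N$.
   Context: $\mathcal{M}^+(\mathbb{R}^k)$: finite nonnegative Borel measures; $\|f\|_{BL}=\max(\sup|f|,\operatorname{Lip}f)$, $\|\mu\|_{BL^*}=\sup\{\int\psi\,d\mu:\|\psi\|_{BL}\le1\}$. Conditions: (V) $V:\mathcal{M}^+(\mathbb{R}^d)\to\mathcal{M}^+(\mathbb{R}^d\times\mathbb{R}^d)$, $\pi_1^{\#}V[\mu]=\mu$; (V1) $\sup_{(x,v)\in\operatorname{supp}V[\mu]}|v|\le C_S(1+\sup_{(x,v)\in\operatorname{supp}V[\mu]}|x|)$; (V2) for each $R'>0$, $\|V[\mu]-V[\nu]\|_{BL^*}\le C_F(R')\|\mu-\nu\|_{BL^*}$ for $\mu,\nu$ supported in $B(0,R')$. (S) $s:\mathcal{M}^+(\mathbb{R}^d)\to\mathcal{M}^+(\mathbb{R}^d)$, (S1) $\|s[\mu]-s[\nu]\|_{BL^*}\le L\|\mu-\nu\|_{BL^*}$, (S2) $\operatorname{supp}s[\mu]\subseteq B(0,R)$ for all $\mu$. (C) $c:\mathbb{R}^d\times\mathcal{M}^+(\mathbb{R}^d)\to\mathbb{R}$, (C1) $|c|\le C_b$, (C2) $|c(x,\mu)-c(y,\nu)|\le C_L(|x-y|+\|\mu-\nu\|_{BL^*})$.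 Lattice scheme: fix $T>0$; $\Delta_N=1/N$; $x_1,\dots,x_I$ enumerate $(N^{-2}\mathbb{Z}^d)\cap[-N,N]^d$, $v_1,\dots,v_J$ enumerate $(N^{-1}\mathbb{Z}^d)\cap[-N,N]^d$; $Q_i=x_i+[0,\Delta_N^2)^d$, $Q'_j=v_j+[0,\Delta_N)^d$; $m_i^x(\mu)=\mu(Q_i)$, $m_{ij}^v(W)=W(Q_i\times Q'_j)$. Time points $t_l=l/N$, $l=0,\dots,M$, with the intervals $[t_l,t_{l+1})$ ($l<M$) and $[t_M,T]$ covering $[0,T]$, each of length at most $\Delta_N$. Set $\mu^N_0=\sum_i m_i^x(\mu_0)\delta_{x_i}$ and for $\tau\in[0,\Delta_N]$: $\mu^N_{t_l+\tau}=\tau\sum_i m_i^x(s[\mu^N_{t_l}])\delta_{x_i}+\sum_{i,j}m_{ij}^v(V[\mu^N_{t_l}])e^{c(x_i,\mu^N_{t_l})\tau}\delta_{x_i+\tau v_j}$. *)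

theory Defs
  imports "HOL-Analysis.Analysis"
begin

definition fin_borel :: "'a::topological_space measure \<Rightarrow> bool" where
  "fin_borel M \<longleftrightarrow> sets M = sets borel \<and> emeasure M (space M) < \<infinity>"

definition msupp :: "'a::metric_space measure \<Rightarrow> 'a set" where
  "msupp M = {x. \<forall>e>0. emeasure M (ball x e) > 0}"

definition BL1 :: "('a::metric_space \<Rightarrow> real) set" where
  "BL1 = {\<psi>. (\<forall>x. \<bar>\<psi> x\<bar> \<le> 1) \<and> (\<forall>x y. \<bar>\<psi> x - \<psi> y\<bar> \<le> dist x y)}"

definition bl_dist :: "'a::metric_space measure \<Rightarrow> 'a measure \<Rightarrow> real" where
  "bl_dist M N = (SUP \<psi>\<in>BL1. (integral\<^sup>L M \<psi>) - (integral\<^sup>L N \<psi>))"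

definition dirac_sum :: "'i set \<Rightarrow> ('i \<Rightarrow> 'a::topological_space) \<Rightarrow> ('i \<Rightarrow> real) \<Rightarrow> 'a measure" where
  "dirac_sum I p w = measure_of UNIV (sets borel)
     (\<lambda>A. \<Sum>i\<in>I. ennreal (w i) * indicator A (p i))"

definition xgrid :: "nat \<Rightarrow> (real^'d) set" where
  "xgrid N = {x. \<forall>k. (\<exists>z::int. x$k = real_of_int z / (real N)^2) \<and> \<bar>x$k\<bar> \<le> real N}"

definition vgrid :: "nat \<Rightarrow> (real^'d) set" where
  "vgrid N = {v. \<forall>k. (\<exists>z::int. v$k = real_of_int z / real N) \<and> \<bar>v$k\<bar> \<le> real N}"

definition Qx :: "nat \<Rightarrow> real^'d \<Rightarrow> (real^'d) set" where
  "Qx N x = {y. \<forall>k. x$k \<le> y$k \<and> y$k < x$k + (1 / real N)^2}"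

definition Qv :: "nat \<Rightarrow> real^'d \<Rightarrow> (real^'d) set" where
  "Qv N v = {y. \<forall>k. v$k \<le> y$k \<and> y$k < v$k + 1 / real N}"

definition lattice_init :: "nat \<Rightarrow> (real^'d) measure \<Rightarrow> (real^'d) measure" where
  "lattice_init N \<mu>0 = dirac_sum (xgrid N) id (\<lambda>x. measure \<mu>0 (Qx N x))"

definition lattice_step ::
  "((real^'d) measure \<Rightarrow> ((real^'d) \<times> (real^'d)) measure) \<Rightarrow>
   ((real^'d) measure \<Rightarrow> (real^'d) measure) \<Rightarrow>
   (real^'d \<Rightarrow> (real^'d) measure \<Rightarrow> real) \<Rightarrow>
   nat \<Rightarrow> (real^'d) measure \<Rightarrow> real \<Rightarrow> (real^'d) measure" where
  "lattice_step V s c N \<mu> \<tau> =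
     dirac_sum (Inl ` xgrid N \<union> Inr ` (xgrid N \<times> vgrid N))
       (case_sum id (\<lambda>(x, v). x + \<tau> *\<^sub>R v))
       (case_sum (\<lambda>x. \<tau> * measure (s \<mu>) (Qx N x))
                 (\<lambda>(x, v). measure (V \<mu>) (Qx N x \<times> Qv N v) * exp (c x \<mu> * \<tau>)))"

text \<open>\<open>\<mu>^N_{t_l}\<close> with \<open>t_l = l/N\<close>; \<open>t_{l+1} = t_l + \<Delta>_N\<close>.\<close>
primrec lattice_sol ::
  "((real^'d) measure \<Rightarrow> ((real^'d) \<times> (real^'d)) measure) \<Rightarrow>
   ((real^'d) measure \<Rightarrow> (real^'d) measure) \<Rightarrow>
   (real^'d \<Rightarrow> (real^'d) measure \<Rightarrow> real) \<Rightarrow>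
   (real^'d) measure \<Rightarrow> nat \<Rightarrow> nat \<Rightarrow> (real^'d) measure" where
  "lattice_sol V s c \<mu>0 N 0 = lattice_init N \<mu>0"
| "lattice_sol V s c \<mu>0 N (Suc l) =
     lattice_step V s c N (lattice_sol V s c \<mu>0 N l) (1 / real N)"

end

theory Submission
  imports Defs
begin

lemma dirac_sum_emeasure:
  assumes "A \<in> sets borel"
  shows "emeasure (dirac_sum I p w) A = (\<Sum>i\<in>I. ennreal (w i) * indicator A (p i))"
  unfolding dirac_sum_def
proof (rule emeasure_measure_of_sigma[OF _ _ _ assms])
  show "sigma_algebra UNIV (sets borel)"
    by (metis sets.sigma_algebra_axioms space_borel)
  show "positive (sets borel) (\<lambda>A. \<Sum>i\<in>I. ennreal (w i) * indicator A (p i))"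
    by (simp add: positive_def)
  show "countably_additive (sets borel) (\<lambda>A. \<Sum>i\<in>I. ennreal (w i) * indicator A (p i))"
    unfolding countably_additive_def
  proof (intro allI impI)
    fix F :: "nat \<Rightarrow> 'a set"
    assume "range F \<subseteq> sets borel" "disjoint_family F"
    then have "(\<Sum>n. \<Sum>i\<in>I. ennreal (w i) * indicator (F n) (p i))
        = (\<Sum>i\<in>I. \<Sum>n. ennreal (w i) * indicator (F n) (p i))"
      by (intro suminf_sum summableI)
    also have "\<dots> = (\<Sum>i\<in>I. ennreal (w i) * indicator (\<Union>n. F n) (p i))"
      using \<open>disjoint_family F\<close> by (simp add: suminf_indicator)
    finally show "(\<Sum>n. \<Sum>i\<in>I. ennreal (w i) * indicator (F n) (p i))
        = (\<Sum>i\<in>I. ennreal (w i) * indicator (\<Union>n. F n) (p i))" .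
  qed
qed

lemma sum_lt_top_ennreal:
  fixes f :: "'i \<Rightarrow> ennreal"
  shows "(\<And>i. f i < top) \<Longrightarrow> sum f I < top"
  by (induction I rule: infinite_finite_induct) (auto simp: less_top)

lemma dirac_sum_fin:
  shows "fin_borel (dirac_sum I p w)"
proof -
  have s: "sets (dirac_sum I p w) = sets borel"
    unfolding dirac_sum_def using sets.sigma_sets_eq[of borel] by (simp add: sets_measure_of_conv)
  then have sp: "space (dirac_sum I p w) = UNIV"
    by (metis sets_eq_imp_space_eq space_borel)
  have "emeasure (dirac_sum I p w) UNIV = (\<Sum>i\<in>I. ennreal (w i) * indicator UNIV (p i))"
    by (rule dirac_sum_emeasure) simp
  also have "\<dots> < \<infinity>"
    by (simp, rule sum_lt_top_ennreal, simp)
  finally show ?thesis unfolding fin_borel_def using s sp by simp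
qed

lemma dirac_sum_msupp:
  fixes p :: "'i \<Rightarrow> 'a::real_normed_vector"
  assumes "\<And>i. i \<in> I \<Longrightarrow> w i > 0 \<Longrightarrow> norm (p i) \<le> B"
  shows "msupp (dirac_sum I p w) \<subseteq> cball 0 B"
proof
  fix y assume y: "y \<in> msupp (dirac_sum I p w)"
  show "y \<in> cball 0 B"
  proof (rule ccontr)
    assume "y \<notin> cball 0 B"
    then have e: "norm y - B > 0" by simp
    have "emeasure (dirac_sum I p w) (ball y (norm y - B)) = (\<Sum>i\<in>I. ennreal (w i) * indicator (ball y (norm y - B)) (p i))"
      by (rule dirac_sum_emeasure) simp
    also have "\<dots> = 0"
    proof (rule sum.neutral, rule ballI)
      fix i assume i: "i \<in> I"
      show "ennreal (w i) * indicator (ball y (norm y - B)) (p i) = 0"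
      proof (cases "w i > 0")
        case True
        then have "norm (p i) \<le> B" using assms i by auto
        then have "p i \<notin> ball y (norm y - B)"
          using norm_triangle_ineq2[of y "p i"] by (auto simp: dist_norm norm_minus_commute)
        then show ?thesis by simp
      next
        case False
        then show ?thesis by (simp add: ennreal_eq_0_iff)
      qed
    qed
    moreover have "emeasure (dirac_sum I p w) (ball y (norm y - B)) > 0"
      using y e unfolding msupp_def by blast
    ultimately show False by simp
  qed
qed

lemma supp_hit:
  fixes M :: "'a::metric_space measure"
  assumes sM: "sets M = sets borel" and pos: "measure M A > 0" and AK: "A \<subseteq> K" and K: "compact K"
  shows "\<exists>y\<in>K. y \<in> msupp M"
proof (rule ccontr)
  assume "\<not> ?thesis"
  then have "\<forall>y\<in>K. \<exists>e>0. emeasure M (ball y e) = 0"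
    unfolding msupp_def by (auto simp: not_less)
  then obtain e where e: "\<And>y. y \<in> K \<Longrightarrow> e y > 0 \<and> emeasure M (ball y (e y)) = 0"
    by metis
  have "K \<subseteq> (\<Union>y\<in>K. ball y (e y))" using e by force
  then obtain F where F: "F \<subseteq> K" "finite F" "K \<subseteq> (\<Union>y\<in>F. ball y (e y))"
    using compactE_image[OF K, of K "\<lambda>y. ball y (e y)"] by auto
  have AM: "A \<in> sets M" using pos measure_notin_sets by fastforce
  have bM: "\<And>y. ball y (e y) \<in> sets M" using sM by simp
  have "emeasure M A \<le> emeasure M (\<Union>y\<in>F. ball y (e y))"
    using AK F(3) sM by (intro emeasure_mono) (auto intro!: borel_open)
  also have "\<dots> \<le> (\<Sum>y\<in>F. emeasure M (ball y (e y)))"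
    using F(2) bM by (intro emeasure_subadditive_finite) auto
  also have "\<dots> = 0" using F(1) e by (intro sum.neutral) auto
  finally have "emeasure M A = 0" by simp
  then have "measure M A = 0" by (simp add: measure_def)
  then show False using pos by simp
qed

lemma supp_fst:
  fixes W :: "('a::metric_space \<times> 'b::metric_space) measure"
  assumes sW: "sets W = sets borel" and d: "distr W borel fst = \<mu>" and p: "p \<in> msupp W"
  shows "fst p \<in> msupp \<mu>"
  unfolding msupp_def
proof (intro CollectI allI impI)
  fix e :: real assume e: "e > 0"
  have meas: "fst \<in> measurable W borel"
    using measurable_cong_sets[OF sW refl] borel_measurable_continuous_onI[OF continuous_on_fst[OF continuous_on_id]]
    by auto
  have "emeasure \<mu> (ball (fst p) e) = emeasure W (fst -` ball (fst p) e \<inter> space W)"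
    using d emeasure_distr[OF meas, of "ball (fst p) e"] by auto
  also have "\<dots> \<ge> emeasure W (ball p e)"
  proof (rule emeasure_mono)
    show "ball p e \<subseteq> fst -` ball (fst p) e \<inter> space W"
      using sets_eq_imp_space_eq[OF sW] dist_fst_le[of p]
      by (auto simp: dist_commute) (metis dist_commute fst_conv le_less_trans)
    show "fst -` ball (fst p) e \<inter> space W \<in> sets W"
      using meas by (simp add: measurable_sets)
  qed
  finally show "emeasure \<mu> (ball (fst p) e) > 0"
    using p e unfolding msupp_def by (auto intro: less_le_trans)
qed

lemma Qx_sub:
  fixes x :: "real^'d"
  shows "Qx N x \<subseteq> cball x (real CARD('d) * (1 / real N)^2)"
proof
  fix y assume y: "y \<in> Qx N x"
  have "norm (y - x) \<le> (\<Sum>k\<in>UNIV. \<bar>(y - x)$k\<bar>)" by (rule norm_le_l1_cart)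
  also have "\<dots> \<le> (\<Sum>k\<in>(UNIV::'d set). (1 / real N)^2)"
  proof (rule sum_mono)
    fix k
    have "x$k \<le> y$k" "y$k < x$k + (1 / real N)^2" using y unfolding Qx_def by auto
    then show "\<bar>(y - x)$k\<bar> \<le> (1 / real N)^2" by simp
  qed
  also have "\<dots> = real CARD('d) * (1 / real N)^2" by simp
  finally show "y \<in> cball x (real CARD('d) * (1 / real N)^2)"
    by (simp add: dist_norm norm_minus_commute)
qed

lemma Qv_sub:
  fixes v :: "real^'d"
  shows "Qv N v \<subseteq> cball v (real CARD('d) * (1 / real N))"
proof
  fix y assume y: "y \<in> Qv N v"
  have "norm (y - v) \<le> (\<Sum>k\<in>UNIV. \<bar>(y - v)$k\<bar>)" by (rule norm_le_l1_cart)
  also have "\<dots> \<le> (\<Sum>k\<in>(UNIV::'d set). (1 / real N))"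
  proof (rule sum_mono)
    fix k
    have "v$k \<le> y$k" "y$k < v$k + (1 / real N)" using y unfolding Qv_def by auto
    then show "\<bar>(y - v)$k\<bar> \<le> (1 / real N)" by simp
  qed
  also have "\<dots> = real CARD('d) * (1 / real N)" by simp
  finally show "y \<in> cball v (real CARD('d) * (1 / real N))"
    by (simp add: dist_norm norm_minus_commute)
qed

theorem corollary4p5:
  fixes V :: "(real^'d) measure \<Rightarrow> ((real^'d) \<times> (real^'d)) measure"
    and s :: "(real^'d) measure \<Rightarrow> (real^'d) measure"
    and c :: "real^'d \<Rightarrow> (real^'d) measure \<Rightarrow> real"
    and \<mu>0 :: "(real^'d) measure"
    and T C_S L R C_b C_L :: real
    and C_F :: "real \<Rightarrow> real"
  assumes T: "T > 0"
    and V: "\<And>\<mu>. fin_borel \<mu> \<Longrightarrow> fin_borel (V \<mu>) \<and> distr (V \<mu>) borel fst = \<mu>"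
    and V1: "\<And>\<mu> R0 x v. fin_borel \<mu> \<Longrightarrow>
               (\<forall>p\<in>msupp (V \<mu>). norm (fst p) \<le> R0) \<Longrightarrow>
               (x, v) \<in> msupp (V \<mu>) \<Longrightarrow> norm v \<le> C_S * (1 + R0)"
    and V2: "\<And>R' \<mu> \<nu>. R' > 0 \<Longrightarrow> fin_borel \<mu> \<Longrightarrow> fin_borel \<nu> \<Longrightarrow>
               msupp \<mu> \<subseteq> ball 0 R' \<Longrightarrow> msupp \<nu> \<subseteq> ball 0 R' \<Longrightarrow>
               bl_dist (V \<mu>) (V \<nu>) \<le> C_F R' * bl_dist \<mu> \<nu>"
    and S: "\<And>\<mu>. fin_borel \<mu> \<Longrightarrow> fin_borel (s \<mu>)"
    and S1: "\<And>\<mu> \<nu>. fin_borel \<mu> \<Longrightarrow> fin_borel \<nu> \<Longrightarrow>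
               bl_dist (s \<mu>) (s \<nu>) \<le> L * bl_dist \<mu> \<nu>"
    and S2: "\<And>\<mu>. fin_borel \<mu> \<Longrightarrow> msupp (s \<mu>) \<subseteq> ball 0 R"
    and C1: "\<And>x \<mu>. fin_borel \<mu> \<Longrightarrow> \<bar>c x \<mu>\<bar> \<le> C_b"
    and C2: "\<And>x y \<mu> \<nu>. fin_borel \<mu> \<Longrightarrow> fin_borel \<nu> \<Longrightarrow>
               \<bar>c x \<mu> - c y \<nu>\<bar> \<le> C_L * (dist x y + bl_dist \<mu> \<nu>)"
    and mu0: "fin_borel \<mu>0" "compact (msupp \<mu>0)"
  shows "\<exists>K_V. compact K_V \<and>
           (\<exists>N0. \<forall>N\<ge>N0. \<forall>l. real l \<le> T * real N \<longrightarrow>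
               msupp (V (lattice_sol V s c \<mu>0 N l)) \<subseteq> K_V)"
proof -
  obtain r0 where r0: "msupp \<mu>0 \<subseteq> cball 0 r0" "r0 \<ge> 0"
    using compact_imp_bounded[OF mu0(2)] unfolding bounded_pos
    by (metis less_imp_le mem_cball_0 subsetI)
  define C where "C = \<bar>C_S\<bar>"
  define D where "D = real CARD('d)"
  define B where "B = max (max (\<bar>R\<bar> + D) (r0 + D)) 0"
  define Rm where "Rm = (B + (C + 2 * D) * T) * exp (C * T)"
  have C0: "C \<ge> 0" and D0: "D \<ge> 0" and B0: "B \<ge> 0" using C_def D_def B_def by auto
  show ?thesis
  proof (intro exI conjI)
    show "compact (cball (0::real^'d) Rm \<times> cball (0::real^'d) (C * (1 + Rm)))"
      by (intro compact_Times compact_cball)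
    show "\<forall>N\<ge>1. \<forall>l. real l \<le> T * real N \<longrightarrow>
        msupp (V (lattice_sol V s c \<mu>0 N l)) \<subseteq> cball 0 Rm \<times> cball 0 (C * (1 + Rm))"
    proof (intro allI impI)
      fix N l :: nat
      assume N: "N \<ge> 1" and lT: "real l \<le> T * real N"
      define h where "h = 1 / real N"
      have h0: "h > 0" and h1: "h \<le> 1" using N h_def by auto
      have hl: "h * real l \<le> T" using lT N unfolding h_def by (simp add: field_simps)
      have hh: "h^2 \<le> h" using h0 h1 by (simp add: power2_eq_square mult_left_le)
      define a where "a = 1 + C * h"
      define b where "b = h * (C + 2 * D)"
      define U where "U = (\<lambda>l::nat. (B + b * real l) * a ^ l)"
      have a1: "a \<ge> 1" using a_def C0 h0 by simp
      have b0: "b \<ge> 0" using b_def C0 D0 h0 by simp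
      have U0: "U k \<ge> 0" for k using U_def B0 b0 a1 by simp
      have UB: "U k \<ge> B" for k
      proof -
        have "B \<le> B + b * real k" using b0 by simp
        also have "\<dots> \<le> (B + b * real k) * a ^ k"
        proof -
          have "0 \<le> B + b * real k" using B0 b0 by simp
          then show ?thesis using one_le_power[OF a1, of k]
            by (metis mult.right_neutral mult_left_mono)
        qed
        finally show ?thesis unfolding U_def .
      qed
      have Ustep: "U k * a + b \<le> U (Suc k)" for k
      proof -
        have "U (Suc k) = (B + b * real k) * a ^ k * a + b * a ^ Suc k"
          unfolding U_def by (simp add: algebra_simps)
        moreover have "b \<le> b * a ^ Suc k" using b0 a1 one_le_power[OF a1, of "Suc k"]
          by (simp add: mult_le_cancel_left1)
        ultimately show ?thesis unfolding U_def by simp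
      qed
      let ?mu = "lattice_sol V s c \<mu>0 N"
      have fst_bound: "\<And>p. fin_borel \<mu> \<Longrightarrow> msupp \<mu> \<subseteq> cball 0 r \<Longrightarrow> p \<in> msupp (V \<mu>) \<Longrightarrow>
            norm (fst p) \<le> r \<and> norm (snd p) \<le> C_S * (1 + r)" for \<mu> r
      proof -
        fix p assume fb: "fin_borel \<mu>" and sr: "msupp \<mu> \<subseteq> cball 0 r" and p: "p \<in> msupp (V \<mu>)"
        have sV: "sets (V \<mu>) = sets borel" using V[OF fb] unfolding fin_borel_def by auto
        have all: "\<forall>q\<in>msupp (V \<mu>). norm (fst q) \<le> r"
          using supp_fst[OF sV conjunct2[OF V[OF fb]]] sr by fastforce
        then have "norm (fst p) \<le> r" using p by auto
        moreover have "norm (snd p) \<le> C_S * (1 + r)"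
          using V1[OF fb all, of "fst p" "snd p"] p by simp
        ultimately show "norm (fst p) \<le> r \<and> norm (snd p) \<le> C_S * (1 + r)" by simp
      qed
      have P: "fin_borel (?mu k) \<and> msupp (?mu k) \<subseteq> cball 0 (U k)" for k
      proof (induction k)
        case 0
        have "msupp (?mu 0) \<subseteq> cball 0 B"
          unfolding lattice_sol.simps lattice_init_def
        proof (rule dirac_sum_msupp)
          fix x :: "real^'d" assume "measure \<mu>0 (Qx N x) > 0"
          moreover have "sets \<mu>0 = sets borel" using mu0(1) unfolding fin_borel_def by auto
          ultimately obtain y where y: "y \<in> cball x (D * h^2)" "y \<in> msupp \<mu>0"
            using supp_hit[OF _ _ Qx_sub compact_cball] unfolding D_def h_def by blast
          have "norm x \<le> norm y + dist x y" by (metis dist_norm norm_triangle_sub)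
          also have "\<dots> \<le> r0 + D * h^2" using y r0 by (intro add_mono) auto
          also have "\<dots> \<le> r0 + D" using D0 h1 h0
            by (simp add: mult_left_le power_le_one)
          also have "\<dots> \<le> B" unfolding B_def by simp
          finally show "norm (id x) \<le> B" by simp
        qed
        moreover have "U 0 = B" unfolding U_def by simp
        ultimately show ?case unfolding lattice_sol.simps lattice_init_def
          by (simp add: dirac_sum_fin)
      next
        case (Suc k)
        have fb: "fin_borel (?mu k)" and sk: "msupp (?mu k) \<subseteq> cball 0 (U k)" using Suc by auto
        have "msupp (?mu (Suc k)) \<subseteq> cball 0 (U (Suc k))"
          unfolding lattice_sol.simps lattice_step_def h_def[symmetric]
        proof (rule dirac_sum_msupp)
          fix i assume i: "i \<in> Inl ` xgrid N \<union> Inr ` (xgrid N \<times> vgrid N)"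
            and w: "case_sum (\<lambda>x. h * measure (s (?mu k)) (Qx N x))
                 (\<lambda>(x, v). measure (V (?mu k)) (Qx N x \<times> Qv N v) * exp (c x (?mu k) * h)) i > 0"
          show "norm (case_sum id (\<lambda>(x, v). x + h *\<^sub>R v) i) \<le> U (Suc k)"
          proof (cases i)
            case (Inl x)
            have "measure (s (?mu k)) (Qx N x) > 0" using w Inl h0 by (simp add: zero_less_mult_iff)
            moreover have "sets (s (?mu k)) = sets borel" using S[OF fb] unfolding fin_borel_def by auto
            ultimately obtain y where y: "y \<in> cball x (D * h^2)" "y \<in> msupp (s (?mu k))"
              using supp_hit[OF _ _ Qx_sub compact_cball] unfolding D_def h_def by blast
            have "norm x \<le> norm y + dist x y" by (metis dist_norm norm_triangle_sub)
            also have "\<dots> \<le> \<bar>R\<bar> + D * h^2" using y S2[OF fb] by (intro add_mono) auto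
            also have "\<dots> \<le> \<bar>R\<bar> + D" using D0 h1 h0
              by (simp add: mult_left_le power_le_one)
            also have "\<dots> \<le> B" unfolding B_def by simp
            also have "\<dots> \<le> U (Suc k)" by (rule UB)
            finally show ?thesis using Inl by simp
          next
            case (Inr xv)
            obtain x v where xv: "xv = (x, v)" by fastforce
            have "measure (V (?mu k)) (Qx N x \<times> Qv N v) > 0" using w Inr xv
              by (simp add: zero_less_mult_iff)
            moreover have "sets (V (?mu k)) = sets borel" using V[OF fb] unfolding fin_borel_def by auto
            moreover have "Qx N x \<times> Qv N v \<subseteq> cball x (D * h^2) \<times> cball v (D * h)"
              using Qx_sub[of N x] Qv_sub[of N v] unfolding D_def h_def by auto
            ultimately obtain y where y: "y \<in> cball x (D * h^2) \<times> cball v (D * h)" "y \<in> msupp (V (?mu k))"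
              using supp_hit[OF _ _ _ compact_Times[OF compact_cball compact_cball]] by blast
            have fy: "norm (fst y) \<le> U k" and sy: "norm (snd y) \<le> C_S * (1 + U k)"
              using fst_bound[OF fb sk y(2)] by auto
            have sy': "norm (snd y) \<le> C * (1 + U k)"
              using sy U0[of k] C_def by (smt (verit) abs_ge_self mult_right_mono)
            have nx: "norm x \<le> U k + D * h^2"
              using y(1) fy norm_triangle_sub[of x "fst y"]
              by (smt (verit) dist_norm mem_Sigma_iff mem_cball prod.collapse)
            have nv: "norm v \<le> C * (1 + U k) + D * h"
              using y(1) sy' norm_triangle_sub[of v "snd y"]
              by (smt (verit) dist_norm mem_Sigma_iff mem_cball prod.collapse)
            have "norm (x + h *\<^sub>R v) \<le> norm x + h * norm v"
              using norm_triangle_ineq[of x "h *\<^sub>R v"] h0 by simp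
            also have "\<dots> \<le> (U k + D * h^2) + h * (C * (1 + U k) + D * h)"
              using nx nv h0 by (intro add_mono mult_left_mono) auto
            also have "\<dots> = U k * a + h * C + 2 * D * h^2"
              unfolding a_def by (simp add: algebra_simps power2_eq_square)
            also have "\<dots> \<le> U k * a + b"
              unfolding b_def using hh D0 by (simp add: algebra_simps mult_left_mono)
            also have "\<dots> \<le> U (Suc k)" by (rule Ustep)
            finally show ?thesis using Inr xv by simp
          qed
        qed
        then show ?case unfolding lattice_sol.simps lattice_step_def
          by (simp add: dirac_sum_fin)
      qed
      have URm: "U l \<le> Rm"
      proof -
        have "b * real l \<le> (C + 2 * D) * T"
        proof -
          have "b * real l = (C + 2 * D) * (h * real l)" unfolding b_def by simp
          also have "\<dots> \<le> (C + 2 * D) * T" using hl C0 D0 by (intro mult_left_mono) auto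
          finally show ?thesis .
        qed
        moreover have "a ^ l \<le> exp (C * T)"
        proof -
          have "a ^ l \<le> exp (C * h) ^ l"
            unfolding a_def using C0 h0 by (intro power_mono) (auto simp: add_nonneg_nonneg)
          also have "\<dots> = exp (C * (h * real l))"
            by (simp add: exp_of_nat_mult[symmetric] algebra_simps)
          also have "\<dots> \<le> exp (C * T)"
            using hl C0 by (intro exp_mono mult_left_mono) auto
          finally show ?thesis .
        qed
        moreover have "0 \<le> (C + 2 * D) * T" using C0 D0 T by simp
        ultimately show ?thesis unfolding U_def Rm_def using B0 b0 a1
          by (intro mult_mono) auto
      qed
      show "msupp (V (?mu l)) \<subseteq> cball 0 Rm \<times> cball 0 (C * (1 + Rm))"
      proof
        fix p assume p: "p \<in> msupp (V (?mu l))"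
        have "norm (fst p) \<le> U l" "norm (snd p) \<le> C_S * (1 + U l)"
          using fst_bound[of "?mu l" "U l" p] P[of l] p by auto
        moreover have "C_S * (1 + U l) \<le> C * (1 + Rm)"
          using URm U0[of l] C_def by (smt (verit) abs_ge_self mult_mono)
        ultimately show "p \<in> cball 0 Rm \<times> cball 0 (C * (1 + Rm))"
          using URm by (cases p) auto
      qed
    qed
  qed
qed

end
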